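(* Let $\mathcal M$ satisfy Assumptions (A) and (RE). If a predictor $h(X,S)$ is counterfactually fair, then it satisfies statistical parity, i.e. $h(X,S)$ is independent of $S$. The converse does not hold in general: there exist an SCM satisfying (A) and (RE) and a predictor satisfying statistical parity that is not counterfactually fair.
   Context: Setting: a structural causal model $\mathcal M$ (exogenous random vector $U$, possibly with dependent components; structural equations $V_i=G_i(V_{\mathrm{Endo}(i)},U_{\mathrm{Exo}(i)})$ with measurable $G_i$) whose a.s. unique solution is $(X,S)$ with $X$ valued in $\mathcal X\subseteq\mathbb R^d$ and $S$ valued in a finite $\mathcal S\subset\mathbb R$ with $\mathbb P(S=s)>0$ for all $s$. Assumption (A): the causal graph (edge $k\to l$ iff $k$ is an endogenous or exogenous parent of $l$) is acyclic. $U_X,U_S$ denote the exogenous parents of $X$ and of $S$. For $s\in\mathcal S$, $X_{S=s}$ is the $X$-component of the solution of the model where the equation of $S$ is replaced by $S=s$, all else (including $U$) unchanged. $\mu_s:=\mathcal L(X\mid S=s)$, $\mathcal X_s:=\operatorname{supp}\mu_s$. Assumption (RE): $U_S$ is independent of $U_X$, and no component of $X$ is an endogenous parent of $S$. A predictor $\hat Y=h(X,S)$ with $h:\mathcal X\times\mathcal S\to\mathbb R$ measurable is counterfactually fair if for every $s,s'\in\mathcal S$ and $\mu_s$-almost every $x\in\mathcal X_s$, $\mathcal L(\hat Y_{S=s}\mid X=x,S=s)=\mathcal L(\hat Y_{S=s'}\mid X=x,S=s)$, where $\hat Y_{S=s}:=h(X_{S=s},s)$. *)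

theory Defs
  imports "HOL-Probability.Probability"
begin

text \<open>
Endogenous variables are indexed by the type 'd option:
index None is the sensitive attribute S, index Some k is the k-th component of X
(so X is valued in real^'d).  The exogenous vector U is valued in real^'e, its law
is the probability measure PU on the Borel sets of real^'e (components may be
dependent).  G i v u is the structural function of endogenous variable i, where v
is an assignment of values to all endogenous variables and u the exogenous value;
Endo i and Exo i are its endogenous and exogenous parents, and G i depends only on
v restricted to Endo i and u restricted to Exo i.
\<close>

type_synonym ('d, 'e) struct_eqs = "'d option \<Rightarrow> ('d option \<Rightarrow> real) \<Rightarrow> real^'e \<Rightarrow> real"

definition endo_val :: "real^'d \<Rightarrow> real \<Rightarrow> 'd option \<Rightarrow> real" where
  "endo_val x s = (\<lambda>i. case i of None \<Rightarrow> s | Some k \<Rightarrow> x $ k)"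

definition is_solution :: "('d, 'e) struct_eqs \<Rightarrow> ('d option \<Rightarrow> real) \<Rightarrow> real^'e \<Rightarrow> bool" where
  "is_solution G v u \<longleftrightarrow> (\<forall>i. v i = G i v u)"

definition intervene_S :: "('d, 'e) struct_eqs \<Rightarrow> real \<Rightarrow> ('d, 'e) struct_eqs" where
  "intervene_S G s = G(None := (\<lambda>_ _. s))"

definition causal_graph ::
  "('d option \<Rightarrow> 'd option set) \<Rightarrow> ('d option \<Rightarrow> 'e set) \<Rightarrow> (('d option + 'e) \<times> ('d option + 'e)) set" where
  "causal_graph Endo Exo =
     {(Inl k, Inl l) | k l. k \<in> Endo l} \<union> {(Inr j, Inl l) | j l. j \<in> Exo l}"

definition exo_X :: "('d option \<Rightarrow> 'e set) \<Rightarrow> 'e set" where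
  "exo_X Exo = (\<Union>k. Exo (Some k))"

definition exo_S :: "('d option \<Rightarrow> 'e set) \<Rightarrow> 'e set" where
  "exo_S Exo = Exo None"

definition restr_exo :: "'e set \<Rightarrow> real^'e \<Rightarrow> ('e \<Rightarrow> real)" where
  "restr_exo J u = (\<lambda>j\<in>J. u $ j)"

definition scm_setting ::
  "(real^'e) measure \<Rightarrow> ('d, 'e) struct_eqs \<Rightarrow> ('d option \<Rightarrow> 'd option set) \<Rightarrow> ('d option \<Rightarrow> 'e set)
   \<Rightarrow> (real^'e \<Rightarrow> real^'d) \<Rightarrow> (real^'e \<Rightarrow> real) \<Rightarrow> (real \<Rightarrow> real^'e \<Rightarrow> real^'d) \<Rightarrow> real set \<Rightarrow> bool" where
  "scm_setting PU G Endo Exo X S Xdo Ss \<longleftrightarrow>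
     prob_space PU \<and> sets PU = sets borel \<and>
     (\<forall>i. (\<lambda>(v, u). G i v u) \<in> borel_measurable (PiM UNIV (\<lambda>_. borel) \<Otimes>\<^sub>M borel)) \<and>
     (\<forall>i v v' u u'. (\<forall>k\<in>Endo i. v k = v' k) \<longrightarrow> (\<forall>j\<in>Exo i. u $ j = u' $ j)
        \<longrightarrow> G i v u = G i v' u') \<and>
     X \<in> borel_measurable PU \<and> S \<in> borel_measurable PU \<and>
     (AE u in PU. is_solution G (endo_val (X u) (S u)) u) \<and>
     finite Ss \<and> (AE u in PU. S u \<in> Ss) \<and>
     (\<forall>s\<in>Ss. measure PU {u \<in> space PU. S u = s} > 0) \<and>
     (\<forall>s\<in>Ss. Xdo s \<in> borel_measurable PU \<and>
        (AE u in PU. is_solution (intervene_S G s) (endo_val (Xdo s u) s) u))"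

definition assm_A :: "('d option \<Rightarrow> 'd option set) \<Rightarrow> ('d option \<Rightarrow> 'e set) \<Rightarrow> bool" where
  "assm_A Endo Exo \<longleftrightarrow> acyclic (causal_graph Endo Exo)"

definition assm_RE :: "(real^'e) measure \<Rightarrow> ('d option \<Rightarrow> 'd option set) \<Rightarrow> ('d option \<Rightarrow> 'e set) \<Rightarrow> bool" where
  "assm_RE PU Endo Exo \<longleftrightarrow>
     prob_space.indep_var PU
       (PiM (exo_S Exo) (\<lambda>_. borel)) (restr_exo (exo_S Exo))
       (PiM (exo_X Exo) (\<lambda>_. borel)) (restr_exo (exo_X Exo)) \<and>
     (\<forall>k. Some k \<notin> Endo None)"

definition cond_S :: "'w measure \<Rightarrow> ('w \<Rightarrow> real) \<Rightarrow> real \<Rightarrow> 'w measure" where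
  "cond_S M S s = uniform_measure M {w \<in> space M. S w = s}"

definition is_cond_law ::
  "'w measure \<Rightarrow> ('w \<Rightarrow> 'a::topological_space) \<Rightarrow> ('w \<Rightarrow> 'b::topological_space) \<Rightarrow> ('a \<Rightarrow> 'b measure) \<Rightarrow> bool" where
  "is_cond_law Q X Y \<kappa> \<longleftrightarrow>
     (\<forall>x. prob_space (\<kappa> x) \<and> sets (\<kappa> x) = sets borel) \<and>
     (\<forall>B \<in> sets borel. (\<lambda>x. emeasure (\<kappa> x) B) \<in> borel_measurable borel) \<and>
     (\<forall>A \<in> sets borel. \<forall>B \<in> sets borel.
        emeasure Q {w \<in> space Q. X w \<in> A \<and> Y w \<in> B} =
        (\<integral>\<^sup>+ x \<in> A. emeasure (\<kappa> x) B \<partial>distr Q borel X))"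

definition cond_laws_ae_eq ::
  "'w measure \<Rightarrow> ('w \<Rightarrow> 'a::topological_space) \<Rightarrow> ('w \<Rightarrow> 'b::topological_space) \<Rightarrow> ('w \<Rightarrow> 'b) \<Rightarrow> bool" where
  "cond_laws_ae_eq Q X Y Y' \<longleftrightarrow>
     (\<exists>\<kappa> \<kappa>'. is_cond_law Q X Y \<kappa> \<and> is_cond_law Q X Y' \<kappa>' \<and>
        (AE x in distr Q borel X. \<kappa> x = \<kappa>' x))"

definition cf_fair ::
  "(real^'e) measure \<Rightarrow> (real^'e \<Rightarrow> real^'d) \<Rightarrow> (real^'e \<Rightarrow> real) \<Rightarrow> (real \<Rightarrow> real^'e \<Rightarrow> real^'d)
   \<Rightarrow> real set \<Rightarrow> (real^'d \<Rightarrow> real \<Rightarrow> real) \<Rightarrow> bool" where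
  "cf_fair PU X S Xdo Ss h \<longleftrightarrow>
     (\<forall>s\<in>Ss. \<forall>s'\<in>Ss.
        cond_laws_ae_eq (cond_S PU S s) X (\<lambda>u. h (Xdo s u) s) (\<lambda>u. h (Xdo s' u) s'))"

definition stat_parity ::
  "(real^'e) measure \<Rightarrow> (real^'e \<Rightarrow> real^'d) \<Rightarrow> (real^'e \<Rightarrow> real) \<Rightarrow> (real^'d \<Rightarrow> real \<Rightarrow> real) \<Rightarrow> bool" where
  "stat_parity PU X S h \<longleftrightarrow>
     prob_space.indep_var PU borel (\<lambda>u. h (X u) (S u)) borel S"

end

theory Submission
  imports Defs
begin

definition iterG :: "('d,'e) struct_eqs \<Rightarrow> real^'e \<Rightarrow> nat \<Rightarrow> ('d option \<Rightarrow> real)" where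
 "iterG G u n = ((\<lambda>v i. G i v u) ^^ n) (\<lambda>_. 0)"

lemma iterG_0: "iterG G u 0 = (\<lambda>_. 0)" by (simp add: iterG_def)
lemma iterG_Suc: "iterG G u (Suc n) = (\<lambda>i. G i (iterG G u n) u)" by (simp add: iterG_def)

lemma iterG_solution:
 fixes G :: "('d::finite,'e::finite) struct_eqs"
 assumes wf: "wf {(k,l). k \<in> Endo l}"
   and loc: "\<And>i v v'. (\<forall>k\<in>Endo i. v k = v' k) \<Longrightarrow> G i v u = G i v' u"
   and sol: "\<forall>i. w i = G i w u"
 shows "iterG G u (CARD('d option)) = w"
proof -
  define C where "C k = {i. \<forall>j\<ge>k. iterG G u j i = w i}" for k
  have mono: "C k \<subseteq> C (Suc k)" for k by (auto simp: C_def)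
  have step: "\<exists>i. i \<notin> C k \<and> i \<in> C (Suc k)" if ne: "C k \<noteq> UNIV" for k
  proof -
    from ne obtain x where "x \<in> - C k" by auto
    with wf obtain i where i: "i \<in> - C k" and min: "\<And>k'. (k', i) \<in> {(k,l). k \<in> Endo l} \<Longrightarrow> k' \<notin> - C k"
      unfolding wf_eq_minimal by metis
    have "i \<in> C (Suc k)"
      unfolding C_def
    proof (safe)
      fix j assume "Suc k \<le> j"
      then obtain j' where j: "j = Suc j'" "k \<le> j'" by (cases j) auto
      have "\<forall>k'\<in>Endo i. iterG G u j' k' = w k'"
        using min j(2) by (auto simp: C_def)
      then have "G i (iterG G u j') u = G i w u" by (rule loc)
      then show "iterG G u j i = w i" using sol j(1) by (simp add: iterG_Suc)
    qed
    with i show ?thesis by auto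
  qed
  have card: "min k CARD('d option) \<le> card (C k)" for k
  proof (induction k)
    case 0 then show ?case by simp
  next
    case (Suc k)
    show ?case
    proof (cases "C k = UNIV")
      case True
      then have "C (Suc k) = UNIV" using mono[of k] by auto
      then show ?thesis by simp
    next
      case False
      then obtain i where "i \<notin> C k" "i \<in> C (Suc k)" using step by blast
      then have "C k \<subset> C (Suc k)" using mono[of k] by auto
      then have "card (C k) < card (C (Suc k))" by (rule psubset_card_mono[OF finite])
      then show ?thesis using Suc.IH by linarith
    qed
  qed
  have "card (C CARD('d option)) \<ge> card (UNIV :: 'd option set)"
    using card[of "CARD('d option)"] by simp
  then have "C CARD('d option) = UNIV"
    by (metis card_seteq finite subset_UNIV)
  then show ?thesis unfolding C_def by auto
qed

lemma iterG_meas: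
  fixes G :: "('d::finite,'e::finite) struct_eqs"
  assumes "\<And>i. (\<lambda>(v, u). G i v u) \<in> borel_measurable (PiM UNIV (\<lambda>_. borel) \<Otimes>\<^sub>M borel)"
  shows "(\<lambda>u. iterG G u n) \<in> measurable borel (PiM UNIV (\<lambda>_. borel))"
proof (induction n)
  case 0 show ?case unfolding iterG_0 by (rule measurable_abs_UNIV) simp
next
  case (Suc n)
  have "(\<lambda>u. G i (iterG G u n) u) \<in> borel_measurable borel" for i
  proof -
    have "(\<lambda>u. (iterG G u n, u)) \<in> measurable borel (PiM UNIV (\<lambda>_. borel) \<Otimes>\<^sub>M borel)"
      using Suc.IH by (intro measurable_Pair) auto
    from measurable_comp[OF this assms[of i]] show ?thesis by (simp add: comp_def)
  qed
  then show ?case unfolding iterG_Suc by (rule measurable_abs_UNIV)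
qed

lemma iterG_exo:
  assumes "\<And>i v. G i v u = G i v u'"
  shows "iterG G u n = iterG G u' n"
  by (induction n) (simp_all add: iterG_0 iterG_Suc assms)

lemma intervene_meas:
  assumes "\<And>i. (\<lambda>(v, u). G i v u) \<in> borel_measurable (PiM UNIV (\<lambda>_. borel) \<Otimes>\<^sub>M borel)"
  shows "(\<lambda>(v, u). intervene_S G s i v u) \<in> borel_measurable (PiM UNIV (\<lambda>_. borel) \<Otimes>\<^sub>M borel)"
  using assms[of i] by (cases i) (auto simp: intervene_S_def)

lemma meas_vec_lambda:
  fixes f :: "'e::finite \<Rightarrow> 'a \<Rightarrow> real"
  assumes "\<And>j. f j \<in> borel_measurable M"
  shows "(\<lambda>x. \<chi> j. f j x) \<in> borel_measurable M"
  apply (subst borel_measurable_euclidean_space)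
  using assms by (auto simp: Basis_vec_def cart_eq_inner_axis[symmetric] inner_axis)

lemma (in prob_space) prob_sum_fin:
  assumes F: "finite F" and SP: "{u\<in>space M. P u} \<in> events" and Sm: "S \<in> borel_measurable M"
  shows "\<P>(u in M. P u \<and> S u \<in> F) = (\<Sum>s\<in>F. \<P>(u in M. P u \<and> S u = (s::real)))"
  using F
proof (induction F rule: finite_induct)
  case empty then show ?case by simp
next
  case (insert a F)
  have ev: "{u\<in>space M. P u \<and> S u = t} \<in> events" for t
    using SP Sm by measurable
  have Fb: "F \<in> sets borel" using insert(1) by (simp add: finite_imp_closed)
  have "{u\<in>space M. P u \<and> S u \<in> F} = {u\<in>space M. P u} \<inter> (S -` F \<inter> space M)" by auto
  then have ev2: "{u\<in>space M. P u \<and> S u \<in> F} \<in> events"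
    using SP measurable_sets[OF Sm Fb] by auto
  have "{u\<in>space M. P u \<and> S u \<in> insert a F} = {u\<in>space M. P u \<and> S u = a} \<union> {u\<in>space M. P u \<and> S u \<in> F}"
    by auto
  then have "\<P>(u in M. P u \<and> S u \<in> insert a F) = \<P>(u in M. P u \<and> S u = a) + \<P>(u in M. P u \<and> S u \<in> F)"
    using insert(2) by (simp add: finite_measure_Union[OF ev ev2] disjoint_iff)
  then show ?case using insert by simp
qed

lemma (in prob_space) indep_varI_rect:
 assumes "random_variable S X" "random_variable T Y"
 "\<And>A B. A\<in>sets S \<Longrightarrow> B\<in>sets T \<Longrightarrow> prob (X -` A \<inter> Y -` B \<inter> space M) = prob (X -` A \<inter> space M) * prob (Y -` B \<inter> space M)"
 shows "indep_var S X T Y"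
  unfolding indep_var_def indep_vars_def2
proof (intro conjI)
  show "\<forall>i\<in>UNIV. random_variable (case_bool S T i) (case_bool X Y i)" using assms(1,2) by (auto split: bool.split)
  have e: "(\<lambda>i. {case_bool X Y i -` A \<inter> space M |A. A \<in> sets (case_bool S T i)}) = case_bool {X -` A \<inter> space M|A. A\<in>sets S} {Y -` A \<inter> space M|A. A\<in>sets T}"
    by (rule ext) (auto split: bool.split)
  have "indep_set {X -` A \<inter> space M|A. A\<in>sets S} {Y -` A \<inter> space M|A. A\<in>sets T}"
    unfolding indep_sets2_eq using assms
    apply (auto simp: measurable_sets)
    by (metis Int_assoc Int_left_commute inf.idem)
  then show "indep_sets (\<lambda>i. {case_bool X Y i -` A \<inter> space M |A. A \<in> sets (case_bool S T i)}) UNIV"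
    unfolding e indep_set_def .
qed

lemma R1_lemma:
  fixes X :: "'w \<Rightarrow> 'a::topological_space" and Y Y' :: "'w \<Rightarrow> real"
  assumes P: "prob_space PU" and cl: "cond_laws_ae_eq (cond_S PU S s) X Y Y'" and B: "B \<in> sets borel"
    and Sm: "S \<in> borel_measurable PU" and Ym: "Y \<in> borel_measurable PU" and Y'm: "Y' \<in> borel_measurable PU"
    and pos: "measure PU {u\<in>space PU. S u = s} > 0"
  shows "measure PU {u\<in>space PU. Y u \<in> B \<and> S u = s} = measure PU {u\<in>space PU. Y' u \<in> B \<and> S u = s}"
proof -
  interpret prob_space PU by (rule P)
  define Es where "Es = {u\<in>space PU. S u = s}"
  define Q where "Q = cond_S PU S s"
  have Q: "Q = uniform_measure PU Es" by (simp add: Q_def cond_S_def Es_def)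
  have spQ: "space Q = space PU" by (simp add: Q)
  obtain \<kappa> \<kappa>' where k1: "is_cond_law Q X Y \<kappa>"
    and k2: "is_cond_law Q X Y' \<kappa>'" and ae: "AE x in distr Q borel X. \<kappa> x = \<kappa>' x"
    using cl unfolding cond_laws_ae_eq_def Q_def by blast
  have U: "(UNIV :: 'a set) \<in> sets borel" by simp
  have k1': "\<forall>A \<in> sets borel. \<forall>B \<in> sets borel. emeasure Q {w \<in> space Q. X w \<in> A \<and> Y w \<in> B} =
      (\<integral>\<^sup>+ x \<in> A. emeasure (\<kappa> x) B \<partial>distr Q borel X)"
    using k1 unfolding is_cond_law_def by (elim conjE)
  have k2': "\<forall>A \<in> sets borel. \<forall>B \<in> sets borel. emeasure Q {w \<in> space Q. X w \<in> A \<and> Y' w \<in> B} =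
      (\<integral>\<^sup>+ x \<in> A. emeasure (\<kappa>' x) B \<partial>distr Q borel X)"
    using k2 unfolding is_cond_law_def by (elim conjE)
  have e1: "emeasure Q {w\<in>space Q. X w \<in> UNIV \<and> Y w \<in> B} = (\<integral>\<^sup>+x\<in>UNIV. emeasure (\<kappa> x) B \<partial>distr Q borel X)"
    using bspec[OF bspec[OF k1' U] B] .
  have e2: "emeasure Q {w\<in>space Q. X w \<in> UNIV \<and> Y' w \<in> B} = (\<integral>\<^sup>+x\<in>UNIV. emeasure (\<kappa>' x) B \<partial>distr Q borel X)"
    using bspec[OF bspec[OF k2' U] B] .
  have "(\<integral>\<^sup>+x\<in>UNIV. emeasure (\<kappa> x) B \<partial>distr Q borel X) = (\<integral>\<^sup>+x\<in>UNIV. emeasure (\<kappa>' x) B \<partial>distr Q borel X)"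
    using ae by (intro nn_integral_cong_AE) (auto elim!: eventually_mono)
  then have "emeasure Q {w\<in>space PU. Y w \<in> B} = emeasure Q {w\<in>space PU. Y' w \<in> B}"
    using e1 e2 by (simp add: spQ)
  then have mQ: "measure Q {w\<in>space PU. Y w \<in> B} = measure Q {w\<in>space PU. Y' w \<in> B}"
    by (simp add: measure_def)
  have Esm: "Es \<in> sets PU" unfolding Es_def using Sm by measurable
  have pos: "measure PU Es > 0" using pos by (simp add: Es_def)
  have en0: "emeasure PU Es \<noteq> 0" using pos by (simp add: emeasure_eq_measure)
  have enT: "emeasure PU Es \<noteq> \<infinity>" by (simp add: emeasure_eq_measure)
  have Ym1: "{w\<in>space PU. Y w \<in> B} \<in> sets PU" using Ym B by measurable
  have Ym2: "{w\<in>space PU. Y' w \<in> B} \<in> sets PU" using Y'm B by measurable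
  have "measure PU (Es \<inter> {w\<in>space PU. Y w \<in> B}) / measure PU Es
      = measure PU (Es \<inter> {w\<in>space PU. Y' w \<in> B}) / measure PU Es"
    using mQ unfolding Q
    by (simp add: measure_uniform_measure[OF en0 enT Ym1] measure_uniform_measure[OF en0 enT Ym2])
  then have "measure PU (Es \<inter> {w\<in>space PU. Y w \<in> B}) = measure PU (Es \<inter> {w\<in>space PU. Y' w \<in> B})"
    using pos by (simp add: divide_cancel_right)
  moreover have "Es \<inter> {w\<in>space PU. Z w \<in> B} = {u\<in>space PU. Z u \<in> B \<and> S u = s}" for Z :: "'w \<Rightarrow> real"
    by (auto simp: Es_def)
  ultimately show ?thesis by simp
qed

lemma R1A_lemma:
  fixes X :: "'w \<Rightarrow> 'a::topological_space" and Y Y' :: "'w \<Rightarrow> real"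
  assumes P: "prob_space PU" and cl: "cond_laws_ae_eq (cond_S PU S s) X Y Y'" and B: "B \<in> sets borel" and A: "A \<in> sets borel" and Xm: "X \<in> borel_measurable PU"
    and Sm: "S \<in> borel_measurable PU" and Ym: "Y \<in> borel_measurable PU" and Y'm: "Y' \<in> borel_measurable PU"
    and pos: "measure PU {u\<in>space PU. S u = s} > 0"
  shows "measure PU {u\<in>space PU. X u \<in> A \<and> Y u \<in> B \<and> S u = s} = measure PU {u\<in>space PU. X u \<in> A \<and> Y' u \<in> B \<and> S u = s}"
proof -
  interpret prob_space PU by (rule P)
  define Es where "Es = {u\<in>space PU. S u = s}"
  define Q where "Q = cond_S PU S s"
  have Q: "Q = uniform_measure PU Es" by (simp add: Q_def cond_S_def Es_def)
  have spQ: "space Q = space PU" by (simp add: Q)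
  obtain \<kappa> \<kappa>' where k1: "is_cond_law Q X Y \<kappa>"
    and k2: "is_cond_law Q X Y' \<kappa>'" and ae: "AE x in distr Q borel X. \<kappa> x = \<kappa>' x"
    using cl unfolding cond_laws_ae_eq_def Q_def by blast
  have U: "(UNIV :: 'a set) \<in> sets borel" by simp
  have k1': "\<forall>A \<in> sets borel. \<forall>B \<in> sets borel. emeasure Q {w \<in> space Q. X w \<in> A \<and> Y w \<in> B} =
      (\<integral>\<^sup>+ x \<in> A. emeasure (\<kappa> x) B \<partial>distr Q borel X)"
    using k1 unfolding is_cond_law_def by (elim conjE)
  have k2': "\<forall>A \<in> sets borel. \<forall>B \<in> sets borel. emeasure Q {w \<in> space Q. X w \<in> A \<and> Y' w \<in> B} =
      (\<integral>\<^sup>+ x \<in> A. emeasure (\<kappa>' x) B \<partial>distr Q borel X)"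
    using k2 unfolding is_cond_law_def by (elim conjE)
  have e1: "emeasure Q {w\<in>space Q. X w \<in> A \<and> Y w \<in> B} = (\<integral>\<^sup>+x\<in>A. emeasure (\<kappa> x) B \<partial>distr Q borel X)"
    using bspec[OF bspec[OF k1' A] B] .
  have e2: "emeasure Q {w\<in>space Q. X w \<in> A \<and> Y' w \<in> B} = (\<integral>\<^sup>+x\<in>A. emeasure (\<kappa>' x) B \<partial>distr Q borel X)"
    using bspec[OF bspec[OF k2' A] B] .
  have "(\<integral>\<^sup>+x\<in>A. emeasure (\<kappa> x) B \<partial>distr Q borel X) = (\<integral>\<^sup>+x\<in>A. emeasure (\<kappa>' x) B \<partial>distr Q borel X)"
    using ae by (intro nn_integral_cong_AE) (auto elim!: eventually_mono)
  then have "emeasure Q {w\<in>space PU. X w \<in> A \<and> Y w \<in> B} = emeasure Q {w\<in>space PU. X w \<in> A \<and> Y' w \<in> B}"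
    using e1 e2 by (simp add: spQ)
  then have mQ: "measure Q {w\<in>space PU. X w \<in> A \<and> Y w \<in> B} = measure Q {w\<in>space PU. X w \<in> A \<and> Y' w \<in> B}"
    by (simp add: measure_def)
  have Esm: "Es \<in> sets PU" unfolding Es_def using Sm by measurable
  have pos: "measure PU Es > 0" using pos by (simp add: Es_def)
  have en0: "emeasure PU Es \<noteq> 0" using pos by (simp add: emeasure_eq_measure)
  have enT: "emeasure PU Es \<noteq> \<infinity>" by (simp add: emeasure_eq_measure)
  have Ym1: "{w\<in>space PU. X w \<in> A \<and> Y w \<in> B} \<in> sets PU" using Ym B A Xm by measurable
  have Ym2: "{w\<in>space PU. X w \<in> A \<and> Y' w \<in> B} \<in> sets PU" using Y'm B A Xm by measurable
  have "measure PU (Es \<inter> {w\<in>space PU. X w \<in> A \<and> Y w \<in> B}) / measure PU Es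
      = measure PU (Es \<inter> {w\<in>space PU. X w \<in> A \<and> Y' w \<in> B}) / measure PU Es"
    using mQ unfolding Q
    by (simp add: measure_uniform_measure[OF en0 enT Ym1] measure_uniform_measure[OF en0 enT Ym2])
  then have "measure PU (Es \<inter> {w\<in>space PU. X w \<in> A \<and> Y w \<in> B}) = measure PU (Es \<inter> {w\<in>space PU. X w \<in> A \<and> Y' w \<in> B})"
    using pos by (simp add: divide_cancel_right)
  moreover have "Es \<inter> {w\<in>space PU. X w \<in> A \<and> Z w \<in> B} = {u\<in>space PU. X u \<in> A \<and> Z u \<in> B \<and> S u = s}" for Z :: "'w \<Rightarrow> real"
    by (auto simp: Es_def)
  ultimately show ?thesis by simp
qed

lemma part1:
  fixes PU :: "(real^'e::finite) measure" and X :: "real^'e \<Rightarrow> real^'d::finite"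
    and G :: "('d,'e) struct_eqs"
  assumes setting: "scm_setting PU G Endo Exo X S Xdo Ss" and A: "assm_A Endo Exo" and RE: "assm_RE PU Endo Exo"
    and hm: "(\<lambda>(x, s). h x s) \<in> borel_measurable (borel \<Otimes>\<^sub>M borel)" and cf: "cf_fair PU X S Xdo Ss h"
  shows "stat_parity PU X S h"
proof -
  note st = setting[unfolded scm_setting_def]
  interpret prob_space PU using st by simp
  have setsPU: "sets PU = sets borel" using st by simp
  have spPU: "space PU = UNIV" using sets_eq_imp_space_eq[OF setsPU] by simp
  have measPU: "measurable PU N = measurable borel N" for N by (rule measurable_cong_sets[OF setsPU refl])
  have Gm: "\<And>i. (\<lambda>(v, u). G i v u) \<in> borel_measurable (PiM UNIV (\<lambda>_. borel) \<Otimes>\<^sub>M borel)" using st by simp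
  have loc: "\<And>i v v' u u'. (\<forall>k\<in>Endo i. v k = v' k) \<Longrightarrow> (\<forall>j\<in>Exo i. u $ j = u' $ j) \<Longrightarrow> G i v u = G i v' u'" using st by blast
  have Xm: "X \<in> borel_measurable PU" and Sm: "S \<in> borel_measurable PU" using st by auto
  have solX: "AE u in PU. is_solution G (endo_val (X u) (S u)) u" using st by simp
  have finSs: "finite Ss" and SinSs: "AE u in PU. S u \<in> Ss" using st by auto
  have Spos: "\<And>s. s\<in>Ss \<Longrightarrow> measure PU {u \<in> space PU. S u = s} > 0" using st by auto
  have Xdom: "\<And>s. s\<in>Ss \<Longrightarrow> Xdo s \<in> borel_measurable PU"
    and solXdo: "\<And>s. s\<in>Ss \<Longrightarrow> AE u in PU. is_solution (intervene_S G s) (endo_val (Xdo s u) s) u"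
    using st by auto

  have wfR: "wf {(k,l). k \<in> Endo l}"
  proof -
    have "finite (causal_graph Endo Exo)" by (rule finite_subset[of _ UNIV]) auto
    then have "wf (causal_graph Endo Exo)" using A unfolding assm_A_def by (rule finite_acyclic_wf)
    then have "wf (inv_image (causal_graph Endo Exo) Inl)" by (rule wf_inv_image)
    then show ?thesis by (rule wf_subset) (auto simp: causal_graph_def)
  qed
  have EndoNone: "Endo None = {}"
  proof -
    have "None \<notin> Endo None"
    proof
      assume "None \<in> Endo None"
      then have "(Inl None, Inl None) \<in> causal_graph Endo Exo" by (auto simp: causal_graph_def)
      then show False using A unfolding assm_A_def acyclic_def by blast
    qed
    moreover have "Some k \<notin> Endo None" for k using RE by (simp add: assm_RE_def)
    ultimately show ?thesis by (metis equals0I not_None_eq)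
  qed
  define N where "N = CARD('d option)"
  define sol where "sol s u = iterG (intervene_S G s) u N" for s u
  have uniq: "w = sol s u" if "is_solution (intervene_S G s) w u" for s w u
  proof -
    have l: "\<And>i v v'. (\<forall>k\<in>Endo i. v k = v' k) \<Longrightarrow> intervene_S G s i v u = intervene_S G s i v' u"
      using loc by (simp add: intervene_S_def)
    have "iterG (intervene_S G s) u CARD('d option) = w"
      using wfR l that[unfolded is_solution_def] by (rule iterG_solution)
    then show ?thesis by (simp add: sol_def N_def)
  qed
  have Xdo_sol: "AE u in PU. Xdo s u = (\<chi> k. sol s u (Some k))" if "s \<in> Ss" for s
    using solXdo[OF that]
  proof eventually_elim
    case (elim u)
    have "endo_val (Xdo s u) s = sol s u" using uniq[OF elim] .
    then have "endo_val (Xdo s u) s (Some k) = sol s u (Some k)" for k by simp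
    then show ?case by (simp add: vec_eq_iff endo_val_def)
  qed
  have X_eq: "AE u in PU. S u = s \<longrightarrow> X u = Xdo s u" if "s\<in>Ss" for s
    using solX solXdo[OF that]
  proof eventually_elim
    case (elim u)
    show ?case
    proof
      assume Su: "S u = s"
      have solXu: "is_solution (intervene_S G s) (endo_val (X u) s) u"
        unfolding is_solution_def
      proof
        fix i show "endo_val (X u) s i = intervene_S G s i (endo_val (X u) s) u"
        proof (cases i)
          case None then show ?thesis by (simp add: intervene_S_def endo_val_def)
        next
          case (Some k)
          have "endo_val (X u) (S u) i = G i (endo_val (X u) (S u)) u"
            using elim(1) unfolding is_solution_def by blast
          then show ?thesis using Some Su by (simp add: intervene_S_def)
        qed
      qed
      have "endo_val (X u) s = endo_val (Xdo s u) s" using uniq[OF solXu] uniq[OF elim(2)] by simp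
      then have "endo_val (X u) s (Some k) = endo_val (Xdo s u) s (Some k)" for k by simp
      then show "X u = Xdo s u" by (simp add: vec_eq_iff endo_val_def)
    qed
  qed
  define v0 where "v0 = (\<lambda>_::'d option. 0::real)"
  have S_eq: "AE u in PU. S u = G None v0 u"
    using solX
  proof eventually_elim
    case (elim u)
    then have "endo_val (X u) (S u) None = G None (endo_val (X u) (S u)) u" unfolding is_solution_def by blast
    then have "S u = G None (endo_val (X u) (S u)) u" by (simp add: endo_val_def)
    also have "\<dots> = G None v0 u" by (rule loc) (simp_all add: EndoNone)
    finally show ?case .
  qed
  define embS where "embS w = (\<chi> j. if j \<in> exo_S Exo then w j else 0)" for w :: "'e \<Rightarrow> real"
  define embX where "embX w = (\<chi> j. if j \<in> exo_X Exo then w j else 0)" for w :: "'e \<Rightarrow> real"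
  have embSm: "embS \<in> borel_measurable (PiM (exo_S Exo) (\<lambda>_. borel))"
    unfolding embS_def
  proof (intro meas_vec_lambda)
    fix j show "(\<lambda>x. if j \<in> exo_S Exo then x j else 0) \<in> borel_measurable (PiM (exo_S Exo) (\<lambda>_. borel))"
      by (cases "j \<in> exo_S Exo") simp_all
  qed
  have embXm: "embX \<in> borel_measurable (PiM (exo_X Exo) (\<lambda>_. borel))"
    unfolding embX_def
  proof (intro meas_vec_lambda)
    fix j show "(\<lambda>x. if j \<in> exo_X Exo then x j else 0) \<in> borel_measurable (PiM (exo_X Exo) (\<lambda>_. borel))"
      by (cases "j \<in> exo_X Exo") simp_all
  qed
  define fS where "fS w = G None v0 (embS w)" for w
  define F where "F t w = (\<chi> k. sol t (embX w) (Some k))" for t w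
  define fY where "fY t w = h (F t w) t" for t w
  define rS where "rS = restr_exo (exo_S Exo)"
  define rX where "rX = restr_exo (exo_X Exo)"
  have G0m: "(\<lambda>u. G None v0 u) \<in> borel_measurable borel"
  proof -
    have "(\<lambda>u. (v0, u)) \<in> measurable borel (PiM UNIV (\<lambda>_. borel) \<Otimes>\<^sub>M borel)"
      by (intro measurable_Pair measurable_const) (auto simp: space_PiM v0_def)
    from measurable_compose[OF this Gm[of None]] show ?thesis by simp
  qed
  have fSm: "fS \<in> borel_measurable (PiM (exo_S Exo) (\<lambda>_. borel))"
    unfolding fS_def using measurable_compose[OF embSm G0m] .
  have solm: "(\<lambda>u. sol t u) \<in> measurable borel (PiM UNIV (\<lambda>_. borel))" for t
    unfolding sol_def by (rule iterG_meas[OF intervene_meas[OF Gm]])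
  have Fm: "F t \<in> borel_measurable (PiM (exo_X Exo) (\<lambda>_. borel))" for t
    unfolding F_def
  proof (intro meas_vec_lambda)
    fix k
    show "(\<lambda>x. sol t (embX x) (Some k)) \<in> borel_measurable (PiM (exo_X Exo) (\<lambda>_. borel))"
      using measurable_compose[OF measurable_compose[OF embXm solm[of t]]
          measurable_component_singleton[of "Some k" UNIV "\<lambda>_. borel"]] by simp
  qed
  have fYm: "fY t \<in> borel_measurable (PiM (exo_X Exo) (\<lambda>_. borel))" for t
    unfolding fY_def using measurable_compose[OF measurable_Pair[OF Fm measurable_const[of t]] hm] by simp
  have ind0: "indep_var (PiM (exo_S Exo) (\<lambda>_. borel)) rS (PiM (exo_X Exo) (\<lambda>_. borel)) rX"
    using RE unfolding assm_RE_def rS_def rX_def by simp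
  have ind: "indep_var borel (fS \<circ> rS) borel (fY t \<circ> rX)" for t
    by (rule indep_var_compose[OF ind0 fSm fYm])
  have S_eq2: "G None v0 u = fS (rS u)" for u
    unfolding fS_def rS_def embS_def restr_exo_def by (rule loc) (auto simp: exo_S_def)
  have sol_eq: "sol t (embX (rX u)) = sol t u" for t u
    unfolding sol_def
  proof (rule iterG_exo)
    fix i v show "intervene_S G t i v (embX (rX u)) = intervene_S G t i v u"
    proof (cases i)
      case None then show ?thesis by (simp add: intervene_S_def)
    next
      case (Some k) then show ?thesis unfolding intervene_S_def embX_def rX_def restr_exo_def
        by simp (rule loc, auto simp: exo_X_def)
    qed
  qed
  have Y_eq: "AE u in PU. h (Xdo t u) t = fY t (rX u)" if "t\<in>Ss" for t
    using Xdo_sol[OF that] by eventually_elim (simp add: fY_def F_def sol_eq)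
  have Ym: "(\<lambda>u. h (Xdo t u) t) \<in> borel_measurable PU" if "t\<in>Ss" for t
    using measurable_compose[OF measurable_Pair[OF Xdom[OF that] measurable_const[of t]] hm] by simp
  have hXSm: "(\<lambda>u. h (X u) (S u)) \<in> borel_measurable PU"
    using measurable_compose[OF measurable_Pair[OF Xm Sm] hm] by simp
  have rvS: "random_variable borel (fS \<circ> rS)" using indep_var_rv1[OF ind] .
  have rvY: "random_variable borel (fY t \<circ> rX)" for t using indep_var_rv2[OF ind] .
  have evY: "{u\<in>space PU. h (Xdo t u) t \<in> B \<and> S u = s} \<in> events" if "t\<in>Ss" "B \<in> sets borel" for t B s
    using Ym[OF that(1)] Sm that(2) by measurable
  have evS: "{u\<in>space PU. S u = s} \<in> events" for s
    using Sm by measurable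
  have R3: "\<P>(u in PU. h (Xdo t u) t \<in> B \<and> S u = s) = \<P>(u in PU. h (Xdo t u) t \<in> B) * \<P>(u in PU. S u = s)"
    if "t\<in>Ss" "B \<in> sets borel" for t B s
  proof -
    have "\<P>(u in PU. (fS\<circ>rS) u \<in> {s} \<and> (fY t \<circ> rX) u \<in> B) = \<P>(u in PU. (fS\<circ>rS) u \<in> {s}) * \<P>(u in PU. (fY t \<circ> rX) u \<in> B)"
      by (rule prob_indep_random_variable[OF ind]) (auto simp: that)
    moreover have "\<P>(u in PU. (fS\<circ>rS) u \<in> {s} \<and> (fY t \<circ> rX) u \<in> B) = \<P>(u in PU. h (Xdo t u) t \<in> B \<and> S u = s)"
    proof (rule prob_eq_AE)
      show "AE u in PU. ((fS\<circ>rS) u \<in> {s} \<and> (fY t \<circ> rX) u \<in> B) = (h (Xdo t u) t \<in> B \<and> S u = s)"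
        using S_eq Y_eq[OF that(1)] by eventually_elim (auto simp: S_eq2)
      show "{u\<in>space PU. (fS\<circ>rS) u \<in> {s} \<and> (fY t \<circ> rX) u \<in> B} \<in> events"
        using rvS rvY[of t] that(2) by measurable
      show "{u\<in>space PU. h (Xdo t u) t \<in> B \<and> S u = s} \<in> events" by (rule evY[OF that])
    qed
    moreover have "\<P>(u in PU. (fS\<circ>rS) u \<in> {s}) = \<P>(u in PU. S u = s)"
    proof (rule prob_eq_AE)
      show "AE u in PU. ((fS\<circ>rS) u \<in> {s}) = (S u = s)"
        using S_eq by eventually_elim (auto simp: S_eq2)
      show "{u\<in>space PU. (fS\<circ>rS) u \<in> {s}} \<in> events"
        using rvS by measurable
    qed (rule evS)
    moreover have "\<P>(u in PU. (fY t \<circ> rX) u \<in> B) = \<P>(u in PU. h (Xdo t u) t \<in> B)"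
    proof (rule prob_eq_AE)
      show "AE u in PU. ((fY t \<circ> rX) u \<in> B) = (h (Xdo t u) t \<in> B)"
        using Y_eq[OF that(1)] by eventually_elim auto
      show "{u\<in>space PU. (fY t \<circ> rX) u \<in> B} \<in> events"
        using rvY[of t] that(2) by measurable
      show "{u\<in>space PU. h (Xdo t u) t \<in> B} \<in> events"
        using Ym[OF that(1)] that(2) by measurable
    qed
    ultimately show ?thesis by (simp add: ac_simps)
  qed
  have R1: "\<P>(u in PU. h (Xdo s u) s \<in> B \<and> S u = s) = \<P>(u in PU. h (Xdo s' u) s' \<in> B \<and> S u = s)"
    if "s\<in>Ss" "s'\<in>Ss" "B \<in> sets borel" for s s' B
  proof (rule R1_lemma[where X=X])
    show "prob_space PU" by (rule prob_space_axioms)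
    show "cond_laws_ae_eq (cond_S PU S s) X (\<lambda>u. h (Xdo s u) s) (\<lambda>u. h (Xdo s' u) s')"
      using bspec[OF bspec[OF cf[unfolded cf_fair_def] that(1)] that(2)] .
    show "B \<in> sets borel" by (rule that(3))
    show "S \<in> borel_measurable PU" by (rule Sm)
    show "(\<lambda>u. h (Xdo s u) s) \<in> borel_measurable PU" by (rule Ym[OF that(1)])
    show "(\<lambda>u. h (Xdo s' u) s') \<in> borel_measurable PU" by (rule Ym[OF that(2)])
    show "measure PU {u\<in>space PU. S u = s} > 0" by (rule Spos[OF that(1)])
  qed
  have R2: "\<P>(u in PU. h (X u) (S u) \<in> B \<and> S u = s) = \<P>(u in PU. h (Xdo s u) s \<in> B \<and> S u = s)"
    if "s\<in>Ss" "B \<in> sets borel" for s B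
  proof (rule prob_eq_AE)
    show "AE u in PU. (h (X u) (S u) \<in> B \<and> S u = s) = (h (Xdo s u) s \<in> B \<and> S u = s)"
      using X_eq[OF that(1)] by eventually_elim auto
    show "{u\<in>space PU. h (X u) (S u) \<in> B \<and> S u = s} \<in> events"
      using hXSm Sm that(2) by measurable
  qed (rule evY[OF that])
  have Ssne: "Ss \<noteq> {}"
  proof
    assume "Ss = {}"
    then have "AE u in PU. False" using SinSs by simp
    then show False by (simp add: AE_False)
  qed
  then obtain s0 where s0: "s0 \<in> Ss" by blast
  define L where "L B = \<P>(u in PU. h (Xdo s0 u) s0 \<in> B)" for B
  have C1: "\<P>(u in PU. h (X u) (S u) \<in> B \<and> S u = s) = L B * \<P>(u in PU. S u = s)"
    if "s\<in>Ss" "B \<in> sets borel" for s B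
    using R2[OF that] R1[OF that(1) s0 that(2)] R3[OF s0 that(2), of s] by (simp add: L_def)
  have C2: "\<P>(u in PU. h (X u) (S u) \<in> B \<and> S u \<in> C) = L B * \<P>(u in PU. S u \<in> C)"
    if B: "B \<in> sets borel" and C: "C \<in> sets borel" for B C
  proof -
    have CS: "C \<inter> Ss \<in> sets borel" using C finSs by (simp add: finite_imp_closed sets.Int)
    have evB: "{u\<in>space PU. h (X u) (S u) \<in> B} \<in> events" using hXSm B by measurable
    have "\<P>(u in PU. h (X u) (S u) \<in> B \<and> S u \<in> C) = \<P>(u in PU. h (X u) (S u) \<in> B \<and> S u \<in> C \<inter> Ss)"
    proof (rule prob_eq_AE)
      show "AE u in PU. (h (X u) (S u) \<in> B \<and> S u \<in> C) = (h (X u) (S u) \<in> B \<and> S u \<in> C \<inter> Ss)"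
        using SinSs by eventually_elim auto
      show "{u\<in>space PU. h (X u) (S u) \<in> B \<and> S u \<in> C} \<in> events" using hXSm Sm B C by measurable
      show "{u\<in>space PU. h (X u) (S u) \<in> B \<and> S u \<in> C \<inter> Ss} \<in> events" using hXSm Sm B CS by measurable
    qed
    also have "\<dots> = (\<Sum>s\<in>C \<inter> Ss. \<P>(u in PU. h (X u) (S u) \<in> B \<and> S u = s))"
      by (rule prob_sum_fin[OF _ evB Sm]) (use finSs in simp)
    also have "\<dots> = (\<Sum>s\<in>C \<inter> Ss. L B * \<P>(u in PU. S u = s))"
      by (rule sum.cong) (auto intro!: C1 B)
    also have "\<dots> = L B * (\<Sum>s\<in>C \<inter> Ss. \<P>(u in PU. S u = s))"
      by (simp add: sum_distrib_left)
    also have "(\<Sum>s\<in>C \<inter> Ss. \<P>(u in PU. S u = s)) = \<P>(u in PU. S u \<in> C \<inter> Ss)"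
      using prob_sum_fin[of "C \<inter> Ss" "\<lambda>_. True" S] finSs Sm by simp
    also have "\<P>(u in PU. S u \<in> C \<inter> Ss) = \<P>(u in PU. S u \<in> C)"
    proof (rule prob_eq_AE)
      show "AE u in PU. (S u \<in> C \<inter> Ss) = (S u \<in> C)"
        using SinSs by eventually_elim auto
      show "{u\<in>space PU. S u \<in> C \<inter> Ss} \<in> events" using Sm CS by measurable
      show "{u\<in>space PU. S u \<in> C} \<in> events" using Sm C by measurable
    qed
    finally show ?thesis .
  qed
  have LB: "\<P>(u in PU. h (X u) (S u) \<in> B) = L B" if B: "B \<in> sets borel" for B
    using C2[OF B, of UNIV] by (simp add: prob_space)
  show ?thesis
    unfolding stat_parity_def
  proof (rule indep_varI_rect[OF hXSm Sm])
    fix B C :: "real set" assume B: "B \<in> sets borel" and C: "C \<in> sets borel"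
    have "(\<lambda>u. h (X u) (S u)) -` B \<inter> S -` C \<inter> space PU = {u\<in>space PU. h (X u) (S u) \<in> B \<and> S u \<in> C}"
      by auto
    moreover have "(\<lambda>u. h (X u) (S u)) -` B \<inter> space PU = {u\<in>space PU. h (X u) (S u) \<in> B}" by auto
    moreover have "S -` C \<inter> space PU = {u\<in>space PU. S u \<in> C}" by auto
    ultimately show "prob ((\<lambda>u. h (X u) (S u)) -` B \<inter> S -` C \<inter> space PU) =
        prob ((\<lambda>u. h (X u) (S u)) -` B \<inter> space PU) * prob (S -` C \<inter> space PU)"
      using C2[OF B C] LB[OF B] by simp
  qed
qed

lemma uniform_indep:
  fixes V :: "'a::topological_space set" and f g :: "'a \<Rightarrow> real"
  assumes finV: "finite V" and PU: "PU = distr (measure_pmf (pmf_of_set V)) borel id" and ne: "V \<noteq> {}"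
    and fm: "f \<in> borel_measurable borel" and gm: "g \<in> borel_measurable borel"
    and bij: "bij_betw (\<lambda>v. (f v, g v)) V (F \<times> Gs)"
  shows "prob_space.indep_var PU borel f borel g"
proof -
  have PUp: "prob_space PU" unfolding PU by (rule prob_space.prob_space_distr) (auto simp: measure_pmf.prob_space_axioms)
  interpret prob_space PU by (rule PUp)
  have spPU: "space PU = UNIV" by (simp add: PU)
  have mPU: "measure PU E = card (V \<inter> E) / card V" if "E \<in> sets borel" for E
    using that finV ne by (simp add: PU measure_distr measure_pmf_of_set)
  have finFG: "finite (F \<times> Gs)" using bij_betw_finite[OF bij] finV by simp
  have neFG: "F \<times> Gs \<noteq> {}" using bij ne by (auto simp: bij_betw_def)
  then have neF: "F \<noteq> {}" and neG: "Gs \<noteq> {}" by auto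
  then have finF: "finite F" and finG: "finite Gs" using finFG finite_cartesian_productD1 finite_cartesian_productD2 by blast+
  have cV: "card V = card F * card Gs" using bij_betw_same_card[OF bij] by (simp add: card_cartesian_product)
  have img: "(\<lambda>v. (f v, g v)) ` V = F \<times> Gs" using bij by (simp add: bij_betw_def)
  have cnt: "card (V \<inter> (f -` A \<inter> g -` B)) = card (F \<inter> A) * card (Gs \<inter> B)" for A B
  proof -
    define P where "P = (F \<inter> A) \<times> (Gs \<inter> B)"
    have sub: "P \<subseteq> F \<times> Gs" by (auto simp: P_def)
    have e: "V \<inter> (f -` A \<inter> g -` B) = {v\<in>V. (f v, g v) \<in> P}"
    proof
      show "V \<inter> (f -` A \<inter> g -` B) \<subseteq> {v\<in>V. (f v, g v) \<in> P}"
      proof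
        fix v assume v: "v \<in> V \<inter> (f -` A \<inter> g -` B)"
        then have "(f v, g v) \<in> F \<times> Gs" using img by blast
        then show "v \<in> {v\<in>V. (f v, g v) \<in> P}" using v by (auto simp: P_def)
      qed
    qed (auto simp: P_def)
    have im2: "(\<lambda>v. (f v, g v)) ` {v\<in>V. (f v, g v) \<in> P} = P"
    proof
      show "P \<subseteq> (\<lambda>v. (f v, g v)) ` {v\<in>V. (f v, g v) \<in> P}"
      proof
        fix p assume p: "p \<in> P"
        then have "p \<in> (\<lambda>v. (f v, g v)) ` V" using img sub by blast
        then obtain v where "v \<in> V" "p = (f v, g v)" by blast
        then show "p \<in> (\<lambda>v. (f v, g v)) ` {v\<in>V. (f v, g v) \<in> P}" using p by blast
      qed
    qed blast
    have "bij_betw (\<lambda>v. (f v, g v)) {v\<in>V. (f v, g v) \<in> P} P"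
      by (rule bij_betw_subset[OF bij _ im2]) blast
    then have "card {v\<in>V. (f v, g v) \<in> P} = card P" by (rule bij_betw_same_card)
    then show ?thesis unfolding e by (simp add: P_def card_cartesian_product)
  qed
  show ?thesis
  proof (rule indep_varI_rect)
    show "random_variable borel f" using fm by (simp add: PU)
    show "random_variable borel g" using gm by (simp add: PU)
    fix A B :: "real set" assume A: "A \<in> sets borel" and B: "B \<in> sets borel"
    have s1: "f -` A \<inter> g -` B \<in> sets borel" using fm gm A B by (auto intro: measurable_sets_borel)
    have s2: "f -` A \<in> sets borel" using fm A by (auto intro: measurable_sets_borel)
    have s3: "g -` B \<in> sets borel" using gm B by (auto intro: measurable_sets_borel)
    have c2: "card (V \<inter> f -` A) = card (F \<inter> A) * card Gs" using cnt[of A UNIV] by simp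
    have c3: "card (V \<inter> g -` B) = card F * card (Gs \<inter> B)" using cnt[of UNIV B] by simp
    have e1: "f -` A \<inter> g -` B \<inter> space PU = f -` A \<inter> g -` B" by (simp add: spPU)
    have e2: "f -` A \<inter> space PU = f -` A \<inter> g -` UNIV" by (simp add: spPU)
    have e3: "g -` B \<inter> space PU = f -` UNIV \<inter> g -` B" by (simp add: spPU)
    have s2': "f -` A \<inter> g -` UNIV \<in> sets borel" using s2 by simp
    have s3': "f -` UNIV \<inter> g -` B \<in> sets borel" using s3 by simp
    have cF: "card F > 0" "card Gs > 0" using neF neG finF finG by (auto simp: card_gt_0_iff)
    show "prob (f -` A \<inter> g -` B \<inter> space PU) = prob (f -` A \<inter> space PU) * prob (g -` B \<inter> space PU)"
      unfolding e1 e2 e3 mPU[OF s1] mPU[OF s2'] mPU[OF s3'] cnt cV using cF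
      by (simp add: field_simps)
  qed
qed

definition vv :: "real \<Rightarrow> real \<Rightarrow> real^2" where "vv a b = (\<chi> j. if j = 1 then a else b)"
lemma vv1[simp]: "vv a b $ 1 = a" and vv2[simp]: "vv a b $ 2 = b"
  by (simp_all add: vv_def)

definition VV :: "(real^2) set" where "VV = (\<lambda>(a,b). vv a b) ` ({0,1} \<times> {0,1})"
definition PUx :: "(real^2) measure" where "PUx = distr (measure_pmf (pmf_of_set VV)) borel id"
definition Gx :: "(1, 2) struct_eqs" where
  "Gx i v u = (case i of None \<Rightarrow> u $ 1 | Some k \<Rightarrow> u $ 2)"
definition Endox :: "1 option \<Rightarrow> 1 option set" where "Endox i = {}"
definition Exox :: "1 option \<Rightarrow> 2 set" where "Exox i = (case i of None \<Rightarrow> {1} | Some k \<Rightarrow> {2})"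
definition Xx :: "real^2 \<Rightarrow> real^1" where "Xx u = (\<chi> k. u $ 2)"
definition Sx :: "real^2 \<Rightarrow> real" where "Sx u = u $ 1"
definition Xdox :: "real \<Rightarrow> real^2 \<Rightarrow> real^1" where "Xdox s u = (\<chi> k. u $ 2)"
definition hx :: "real^1 \<Rightarrow> real \<Rightarrow> real" where "hx x s = \<bar>x $ 1 - s\<bar>"

lemma finVV: "finite VV" and neVV: "VV \<noteq> {}" by (auto simp: VV_def)

lemma vv_eq: "u \<in> VV \<Longrightarrow> u = vv (u$1) (u$2)"
  by (auto simp: VV_def)

lemma VV_char: "u \<in> VV \<longleftrightarrow> (u$1 = 0 \<or> u$1 = 1) \<and> (u$2 = 0 \<or> u$2 = 1)"
proof
  assume "u \<in> VV" then show "(u$1 = 0 \<or> u$1 = 1) \<and> (u$2 = 0 \<or> u$2 = 1)" by (auto simp: VV_def)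
next
  assume h: "(u$1 = 0 \<or> u$1 = 1) \<and> (u$2 = 0 \<or> u$2 = 1)"
  have "u = vv (u$1) (u$2)" by (simp add: vec_eq_iff vv_def forall_2)
  then show "u \<in> VV" unfolding VV_def using h by (auto simp: image_iff)
qed

lemma vv_in: "(a = 0 \<or> a = 1) \<Longrightarrow> (b = 0 \<or> b = 1) \<Longrightarrow> vv a b \<in> VV"
  by (simp add: VV_char)

lemma PUx_prob: "prob_space PUx"
  unfolding PUx_def by (rule prob_space.prob_space_distr) (auto simp: measure_pmf.prob_space_axioms)

lemma measure_PUx: "E \<in> sets borel \<Longrightarrow> measure PUx E = card (VV \<inter> E) / card VV"
  using finVV neVV by (simp add: PUx_def measure_distr measure_pmf_of_set)

lemma indep12: "prob_space.indep_var PUx borel (\<lambda>u. u$1) borel (\<lambda>u::real^2. u$2)"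
proof (rule uniform_indep[OF finVV PUx_def neVV])
  show "(\<lambda>u::real^2. u$1) \<in> borel_measurable borel" "(\<lambda>u::real^2. u$2) \<in> borel_measurable borel"
    by (intro borel_measurable_continuous_onI continuous_intros)+
  show "bij_betw (\<lambda>v. (v $ 1, v $ 2)) VV ({0,1} \<times> {0,1})"
    unfolding bij_betw_def inj_on_def
    by (auto simp: VV_char vec_eq_iff forall_2 image_iff) (metis vv_in vv1 vv2)+
qed

lemma nth_meas: "(\<lambda>u::real^'n::finite. u$j) \<in> borel_measurable borel"
  by (intro borel_measurable_continuous_onI continuous_intros)

lemma setsPUx[simp]: "sets PUx = sets borel" by (simp add: PUx_def)
lemma spacePUx[simp]: "space PUx = UNIV" by (simp add: PUx_def)
lemma measPUx: "measurable PUx N = measurable borel N" by (rule measurable_cong_sets) simp_all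

lemma Sx_pos: "s \<in> {0,1} \<Longrightarrow> measure PUx {u\<in>space PUx. Sx u = s} > 0"
proof -
  assume s: "s \<in> {0,1}"
  have E: "{u::real^2. u$1 = s} \<in> sets borel" by (intro borel_closed closed_Collect_eq continuous_intros)
  have "vv s 0 \<in> VV \<inter> {u. u$1 = s}" using s by (auto intro: vv_in)
  then have "card (VV \<inter> {u. u$1 = s}) > 0" using finVV by (auto simp: card_gt_0_iff)
  moreover have "card VV > 0" using finVV neVV by (auto simp: card_gt_0_iff)
  ultimately show ?thesis using measure_PUx[OF E] by (simp add: Sx_def)
qed

lemma AE_VV: "AE u in PUx. u \<in> VV"
proof -
  have "VV \<in> sets borel" using finVV by (simp add: finite_imp_closed)
  then have "{x \<in> space borel. x \<in> VV} \<in> sets borel" by simp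
  then show ?thesis unfolding PUx_def
    by (subst AE_distr_iff) (auto simp: AE_measure_pmf_iff finVV neVV)
qed

lemma part2_setting: "scm_setting PUx Gx Endox Exox Xx Sx Xdox {0,1}"
  unfolding scm_setting_def
proof (intro conjI allI impI ballI)
  show "prob_space PUx" by (rule PUx_prob)
  show "sets PUx = sets borel" by simp
  fix i :: "1 option"
  show "(\<lambda>(v, u). Gx i v u) \<in> borel_measurable (PiM UNIV (\<lambda>_. borel) \<Otimes>\<^sub>M borel)"
  proof (cases i)
    case None
    then have "(\<lambda>(v, u). Gx i v u) = (\<lambda>p. (snd p :: real^2) $ 1)" by (auto simp: Gx_def fun_eq_iff)
    then show ?thesis using measurable_compose[OF measurable_snd nth_meas] by simp
  next
    case (Some k)
    then have "(\<lambda>(v, u). Gx i v u) = (\<lambda>p. (snd p :: real^2) $ 2)" by (auto simp: Gx_def fun_eq_iff)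
    then show ?thesis using measurable_compose[OF measurable_snd nth_meas] by simp
  qed
next
  fix i :: "1 option" and v v' :: "1 option \<Rightarrow> real" and u u' :: "real^2"
  assume "\<forall>j\<in>Exox i. u $ j = u' $ j"
  then show "Gx i v u = Gx i v' u'" by (cases i) (auto simp: Gx_def Exox_def)
next
  show "Xx \<in> borel_measurable PUx" unfolding measPUx Xx_def by (intro meas_vec_lambda nth_meas)
  show "Sx \<in> borel_measurable PUx" unfolding measPUx Sx_def by (rule nth_meas)
  show "AE u in PUx. is_solution Gx (endo_val (Xx u) (Sx u)) u"
    by (auto simp: is_solution_def endo_val_def Gx_def Xx_def Sx_def split: option.split)
  show "finite {0::real,1}" by simp
  show "AE u in PUx. Sx u \<in> {0,1}" using AE_VV by eventually_elim (auto simp: VV_char Sx_def)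
next
  fix s :: real assume s: "s \<in> {0,1}"
  show "measure PUx {u \<in> space PUx. Sx u = s} > 0" by (rule Sx_pos[OF s])
  show "Xdox s \<in> borel_measurable PUx" unfolding measPUx Xdox_def by (intro meas_vec_lambda nth_meas)
  show "AE u in PUx. is_solution (intervene_S Gx s) (endo_val (Xdox s u) s) u"
    by (auto simp: is_solution_def endo_val_def Gx_def Xdox_def intervene_S_def split: option.split)
qed

lemma part2_A: "assm_A Endox Exox"
proof -
  let ?r = "causal_graph Endox Exox"
  have "Domain ?r \<inter> Range ?r = {}" by (auto simp: causal_graph_def Endox_def)
  then show ?thesis unfolding assm_A_def acyclic_def
    by (metis Domain.DomainI Range.RangeI disjoint_iff trancl_domain trancl_range)
qed

lemma part2_RE: "assm_RE PUx Endox Exox"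
proof -
  have eS: "exo_S Exox = {1}" by (simp add: exo_S_def Exox_def)
  have eX: "exo_X Exox = {2}" by (simp add: exo_X_def Exox_def)
  define F1 where "F1 r = (\<lambda>j\<in>{1::2}. r)" for r :: real
  define F2 where "F2 r = (\<lambda>j\<in>{2::2}. r)" for r :: real
  have F1m: "F1 \<in> measurable borel (PiM {1} (\<lambda>_. borel))" unfolding F1_def by (rule measurable_restrict) simp
  have F2m: "F2 \<in> measurable borel (PiM {2} (\<lambda>_. borel))" unfolding F2_def by (rule measurable_restrict) simp
  have r1: "restr_exo {1} = F1 \<circ> (\<lambda>u::real^2. u$1)" by (auto simp: restr_exo_def F1_def fun_eq_iff)
  have r2: "restr_exo {2} = F2 \<circ> (\<lambda>u::real^2. u$2)" by (auto simp: restr_exo_def F2_def fun_eq_iff)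
  have "prob_space.indep_var PUx (PiM {1} (\<lambda>_. borel)) (F1 \<circ> (\<lambda>u::real^2. u$1)) (PiM {2} (\<lambda>_. borel)) (F2 \<circ> (\<lambda>u::real^2. u$2))"
    by (rule prob_space.indep_var_compose[OF PUx_prob indep12 F1m F2m])
  then show ?thesis unfolding assm_RE_def eS eX r1[symmetric] r2[symmetric] by (simp add: Endox_def)
qed

lemma part2_hm: "(\<lambda>(x, s). hx x s) \<in> borel_measurable (borel \<Otimes>\<^sub>M borel)"
proof -
  have "(\<lambda>p::(real^1) \<times> real. \<bar>fst p $ 1 - snd p\<bar>) \<in> borel_measurable borel"
    by (intro borel_measurable_continuous_onI continuous_intros)
  then show ?thesis unfolding borel_prod hx_def by (simp add: case_prod_beta)
qed

lemma part2_sp: "stat_parity PUx Xx Sx hx"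
proof -
  have e: "(\<lambda>u. hx (Xx u) (Sx u)) = (\<lambda>u::real^2. \<bar>u$2 - u$1\<bar>)" by (simp add: hx_def Xx_def Sx_def)
  have "prob_space.indep_var PUx borel (\<lambda>u::real^2. \<bar>u$2 - u$1\<bar>) borel (\<lambda>u::real^2. u$1)"
  proof (rule uniform_indep[OF finVV PUx_def neVV])
    show "(\<lambda>u::real^2. \<bar>u$2 - u$1\<bar>) \<in> borel_measurable borel" "(\<lambda>u::real^2. u$1) \<in> borel_measurable borel"
      by (intro borel_measurable_continuous_onI continuous_intros)+
    show "bij_betw (\<lambda>v. (\<bar>v$2 - v$1\<bar>, v $ 1)) VV ({0,1} \<times> {0,1})"
      unfolding bij_betw_def
    proof
      show "inj_on (\<lambda>v. (\<bar>v$2 - v$1\<bar>, v $ 1)) VV"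
      proof (rule inj_onI)
        fix v w assume v: "v \<in> VV" and w: "w \<in> VV" and eq: "(\<bar>v$2 - v$1\<bar>, v $ 1) = (\<bar>w$2 - w$1\<bar>, w $ 1)"
        have a: "(v$1 = 0 \<or> v$1 = 1) \<and> (v$2 = 0 \<or> v$2 = 1)" using v by (simp add: VV_char)
        have b: "(w$1 = 0 \<or> w$1 = 1) \<and> (w$2 = 0 \<or> w$2 = 1)" using w by (simp add: VV_char)
        have c: "\<bar>v$2 - v$1\<bar> = \<bar>w$2 - w$1\<bar>" "v$1 = w$1" using eq[unfolded prod.inject] by blast+
        have "v$2 = w$2" using a b c by (elim conjE disjE) simp_all
        then show "v = w" using c(2) by (simp add: vec_eq_iff forall_2)
      qed
      show "(\<lambda>v. (\<bar>v$2 - v$1\<bar>, v $ 1)) ` VV = {0,1} \<times> {0,1}"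
      proof
        show "(\<lambda>v. (\<bar>v$2 - v$1\<bar>, v $ 1)) ` VV \<subseteq> {0,1} \<times> {0,1}"
        proof
          fix p assume "p \<in> (\<lambda>v. (\<bar>v$2 - v$1\<bar>, v $ 1)) ` VV"
          then obtain v where v: "v \<in> VV" and p: "p = (\<bar>v$2 - v$1\<bar>, v $ 1)" by blast
          have a: "(v$1 = 0 \<or> v$1 = 1) \<and> (v$2 = 0 \<or> v$2 = 1)" using v by (simp add: VV_char)
          then have "\<bar>v$2 - v$1\<bar> = 0 \<or> \<bar>v$2 - v$1\<bar> = 1" by (elim conjE disjE) simp_all
          then show "p \<in> {0,1} \<times> {0,1}" using a p by auto
        qed
        show "{0,1} \<times> {0,1} \<subseteq> (\<lambda>v. (\<bar>v$2 - v$1\<bar>, v $ 1)) ` VV"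
        proof
          fix p :: "real \<times> real" assume p: "p \<in> {0,1} \<times> {0,1}"
          obtain c a where ca: "p = (c, a)" by (cases p)
          define b where "b = (if c = 0 then a else 1 - a)"
          have a01: "a = 0 \<or> a = 1" and c01: "c = 0 \<or> c = 1" using p ca by auto
          have b01: "b = 0 \<or> b = 1" using a01 unfolding b_def by auto
          have ab: "(a = 0 \<or> a = 1)" "(b = 0 \<or> b = 1)" "c = 0 \<or> c = 1" using a01 b01 c01 by blast+
          have "\<bar>b - a\<bar> = c" using a01 c01 unfolding b_def by (elim disjE) simp_all
          then have "p = (\<bar>vv a b $2 - vv a b $1\<bar>, vv a b $ 1)" using ca by simp
          moreover have "vv a b \<in> VV" using ab by (intro vv_in) auto
          ultimately show "p \<in> (\<lambda>v. (\<bar>v$2 - v$1\<bar>, v $ 1)) ` VV" by blast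
        qed
      qed
    qed
  qed
  moreover have Sx': "Sx = (\<lambda>u. u$1)" by (simp add: Sx_def fun_eq_iff)
  ultimately show ?thesis unfolding stat_parity_def e by metis
qed

lemma part2_notcf: "\<not> cf_fair PUx Xx Sx Xdox {0,1} hx"
proof
  assume cf: "cf_fair PUx Xx Sx Xdox {0,1} hx"
  have cl: "cond_laws_ae_eq (cond_S PUx Sx 0) Xx (\<lambda>u. hx (Xdox 0 u) 0) (\<lambda>u. hx (Xdox 1 u) 1)"
    using bspec[OF bspec[OF cf[unfolded cf_fair_def], of 0] , of 1] by simp
  define A where "A = {x::real^1. x$1 = 0}"
  have Ab: "A \<in> sets borel" unfolding A_def by (intro borel_closed closed_Collect_eq continuous_intros)
  have B: "{0::real} \<in> sets borel" by simp
  have Xm: "Xx \<in> borel_measurable PUx" unfolding measPUx Xx_def by (intro meas_vec_lambda nth_meas)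
  have Sm: "Sx \<in> borel_measurable PUx" unfolding measPUx Sx_def by (rule nth_meas)
  have Ym: "(\<lambda>u. hx (Xdox t u) t) \<in> borel_measurable PUx" for t
  proof -
    have "(\<lambda>u::real^2. \<bar>u$2 - t\<bar>) \<in> borel_measurable borel"
      by (intro borel_measurable_continuous_onI continuous_intros)
    then show ?thesis unfolding measPUx hx_def Xdox_def by simp
  qed
  have eq: "measure PUx {u\<in>space PUx. Xx u \<in> A \<and> hx (Xdox 0 u) 0 \<in> {0} \<and> Sx u = 0}
      = measure PUx {u\<in>space PUx. Xx u \<in> A \<and> hx (Xdox 1 u) 1 \<in> {0} \<and> Sx u = 0}"
    by (rule R1A_lemma[OF PUx_prob cl B Ab Xm Sm Ym Ym Sx_pos]) simp
  have e1: "{u\<in>space PUx. Xx u \<in> A \<and> hx (Xdox 1 u) 1 \<in> {0} \<and> Sx u = 0} = {}"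
    by (auto simp: A_def Xx_def Xdox_def hx_def)
  have e0: "{u\<in>space PUx. Xx u \<in> A \<and> hx (Xdox 0 u) 0 \<in> {0} \<and> Sx u = 0} = {u. u$1 = 0 \<and> u$2 = 0}"
    by (auto simp: A_def Xx_def Xdox_def hx_def Sx_def)
  have E: "{u::real^2. u$1 = 0 \<and> u$2 = 0} \<in> sets borel"
    by (intro borel_closed closed_Collect_conj closed_Collect_eq continuous_intros)
  have "vv 0 0 \<in> VV \<inter> {u. u$1 = 0 \<and> u$2 = 0}" by (auto intro: vv_in)
  then have "card (VV \<inter> {u. u$1 = 0 \<and> u$2 = 0}) > 0" using finVV by (auto simp: card_gt_0_iff)
  moreover have "card VV > 0" using finVV neVV by (auto simp: card_gt_0_iff)
  ultimately have "measure PUx {u. u$1 = 0 \<and> u$2 = 0} > 0" using measure_PUx[OF E] by simp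
  then show False using eq unfolding e0 e1 by simp
qed

theorem proposition6:
  shows "(\<forall>(PU :: (real^'e::finite) measure) G Endo Exo (X :: real^'e \<Rightarrow> real^'d::finite) S Xdo Ss h.
            scm_setting PU G Endo Exo X S Xdo Ss \<and> assm_A Endo Exo \<and> assm_RE PU Endo Exo \<and>
            (\<lambda>(x, s). h x s) \<in> borel_measurable (borel \<Otimes>\<^sub>M borel) \<and>
            cf_fair PU X S Xdo Ss h
            \<longrightarrow> stat_parity PU X S h)
       \<and> (\<exists>(PU :: (real^2) measure) G Endo Exo (X :: real^2 \<Rightarrow> real^1) S Xdo Ss h.
            scm_setting PU G Endo Exo X S Xdo Ss \<and> assm_A Endo Exo \<and> assm_RE PU Endo Exo \<and>
            (\<lambda>(x, s). h x s) \<in> borel_measurable (borel \<Otimes>\<^sub>M borel) \<and>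
            stat_parity PU X S h \<and> \<not> cf_fair PU X S Xdo Ss h)"
proof (rule conjI)
  show "\<forall>(PU :: (real^'e::finite) measure) G Endo Exo (X :: real^'e \<Rightarrow> real^'d::finite) S Xdo Ss h.
            scm_setting PU G Endo Exo X S Xdo Ss \<and> assm_A Endo Exo \<and> assm_RE PU Endo Exo \<and>
            (\<lambda>(x, s). h x s) \<in> borel_measurable (borel \<Otimes>\<^sub>M borel) \<and>
            cf_fair PU X S Xdo Ss h
            \<longrightarrow> stat_parity PU X S h"
    using part1 by blast
  show "\<exists>(PU :: (real^2) measure) G Endo Exo (X :: real^2 \<Rightarrow> real^1) S Xdo Ss h.
            scm_setting PU G Endo Exo X S Xdo Ss \<and> assm_A Endo Exo \<and> assm_RE PU Endo Exo \<and>
            (\<lambda>(x, s). h x s) \<in> borel_measurable (borel \<Otimes>\<^sub>M borel) \<and>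
            stat_parity PU X S h \<and> \<not> cf_fair PU X S Xdo Ss h"
    using part2_setting part2_A part2_RE part2_hm part2_sp part2_notcf by blast
qed

end
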